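(* Let $s\in[\tfrac12,1)$ and let $U$ be the unique positive even solution of $(-\Delta)^sU+U-U^2=0$ in $\mathbb{R}$ with $U\to0$ at infinity. There is a positive constant $\mathfrak c_s$, depending on $\int_{\mathbb{R}}U^2$, such that as $|x|\to\infty$: \[ \int_{\mathbb{R}}U^2(|y|)U(|x-y|)\,dy=\mathfrak c_sU(|x|)(1+o(1)), \] \[ \int_{\mathbb{R}}U^2(|y|)|x-y|^{2s-1}\,dy=\mathfrak c_s|x|^{2s-1}(1+o(1)), \] \[ \int_{\mathbb{R}}U^2(|y|)\log|x-y|\,dy=\mathfrak c_s\log|x|(1+o(1)). \]
   Context: $(-\Delta)^s$ is the fractional Laplacian on $\mathbb{R}$ with Fourier symbol $|\xi|^{2s}$. It is known that $U(x)=\mathfrak b_s|x|^{-1-2s}(1+o(1))$ as $|x|\to\infty$ for some $\mathfrak b_s>0$. *)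

theory Defs
  imports "HOL-Analysis.Analysis" "HOL-Library.Landau_Symbols"
begin

definition fourier :: "(real \<Rightarrow> real) \<Rightarrow> real \<Rightarrow> complex" where
  "fourier f \<xi> = (LINT x|lborel. complex_of_real (f x) * cis (- (\<xi> * x)))"

text \<open>U solves (-Delta)^s U + U - U^2 = 0 on R, where (-Delta)^s is the Fourier
  multiplier with symbol |xi|^(2s): the equation is imposed on the Fourier side,
  for U and U^2 integrable (so that their Fourier transforms are defined).\<close>
definition frac_eq_solution :: "real \<Rightarrow> (real \<Rightarrow> real) \<Rightarrow> bool" where
  "frac_eq_solution s U \<longleftrightarrow>
     integrable lborel U \<and> integrable lborel (\<lambda>x. (U x)\<^sup>2) \<and>
     (\<forall>\<xi>. complex_of_real (\<bar>\<xi>\<bar> powr (2 * s)) * fourier U \<xi> + fourier U \<xi>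
            - fourier (\<lambda>x. (U x)\<^sup>2) \<xi> = 0)"

end

theory Submission
  imports Defs
begin


lemma dct_inf:
  fixes s :: "real \<Rightarrow> real \<Rightarrow> real" and w L :: "real \<Rightarrow> real"
  assumes meas: "\<And>t. s t \<in> borel_measurable lborel" and Lm: "L \<in> borel_measurable lborel"
    and w: "integrable lborel w"
    and lim: "\<And>y. ((\<lambda>t. s t y) \<longlongrightarrow> L y) at_infinity"
    and bnd: "\<forall>\<^sub>F t in at_infinity. \<forall>y. norm (s t y) \<le> w y"
  shows "((\<lambda>t. LINT y|lborel. s t y) \<longlongrightarrow> (LINT y|lborel. L y)) at_infinity"
    and "\<forall>\<^sub>F t in at_infinity. integrable lborel (s t)"
proof -
  have bt: "\<forall>\<^sub>F t in at_top. \<forall>y. norm (s t y) \<le> w y"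
    using bnd filter_leD[OF at_top_le_at_infinity] by blast
  have bb: "\<forall>\<^sub>F t in at_bot. \<forall>y. norm (s t y) \<le> w y"
    using bnd filter_leD[OF at_bot_le_at_infinity] by blast
  have bb': "\<forall>\<^sub>F t in at_top. \<forall>y. norm (s (-t) y) \<le> w y"
    using bb by (simp add: eventually_at_bot_linorder eventually_at_top_linorder) (metis minus_le_iff)
  have A: "((\<lambda>t. LINT y|lborel. s t y) \<longlongrightarrow> (LINT y|lborel. L y)) at_top"
    apply (rule integral_dominated_convergence_at_top[where w=w])
    using meas Lm w bt by (auto elim!: eventually_mono intro!: AE_I2 tendsto_mono[OF at_top_le_at_infinity lim])
  have B: "((\<lambda>t. LINT y|lborel. s (-t) y) \<longlongrightarrow> (LINT y|lborel. L y)) at_top"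
    apply (rule integral_dominated_convergence_at_top[where w=w])
    using meas Lm w bb' apply (auto elim!: eventually_mono intro!: AE_I2)
    apply (rule filterlim_compose[OF lim])
    using filterlim_mono[OF filterlim_uminus_at_bot_at_top at_bot_le_at_infinity order_refl] by (simp add: filterlim_def)
  have B': "((\<lambda>t. LINT y|lborel. s t y) \<longlongrightarrow> (LINT y|lborel. L y)) at_bot"
    using B by (simp add: filterlim_at_bot_mirror)
  show "((\<lambda>t. LINT y|lborel. s t y) \<longlongrightarrow> (LINT y|lborel. L y)) at_infinity"
    unfolding at_infinity_eq_at_top_bot using A B' by (simp add: filterlim_sup)
  show "\<forall>\<^sub>F t in at_infinity. integrable lborel (s t)"
    using bnd
  proof eventually_elim
    case (elim t)
    show ?case by (rule Bochner_Integration.integrable_bound[OF w]) (use meas elim in \<open>auto intro!: AE_I2, metis abs_ge_self order.trans\<close>)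
  qed
qed



lemma ratio_powr_lim:
  fixes y q :: real
  shows "((\<lambda>t. \<bar>t - y\<bar> powr q / \<bar>t\<bar> powr q) \<longlongrightarrow> 1) at_infinity"
proof -
  have yi: "((\<lambda>t::real. y * inverse t) \<longlongrightarrow> y * 0) at_infinity"
    by (rule tendsto_mult[OF tendsto_const tendsto_inverse_0])
  then have "((\<lambda>t::real. \<bar>1 - y * inverse t\<bar> powr q) \<longlongrightarrow> \<bar>1 - y * 0\<bar> powr q) at_infinity"
    by (intro tendsto_powr tendsto_rabs tendsto_diff tendsto_const yi) auto
  then have L: "((\<lambda>t::real. \<bar>1 - y * inverse t\<bar> powr q) \<longlongrightarrow> 1) at_infinity" by simp
  have "\<forall>\<^sub>F t in at_infinity. \<bar>1 - y * inverse t\<bar> powr q = \<bar>t - y\<bar> powr q / \<bar>t\<bar> powr q"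
    unfolding eventually_at_infinity
  proof (intro exI[of _ 1] allI impI)
    fix t :: real assume "1 \<le> norm t"
    then have t: "t \<noteq> 0" by auto
    have "1 - y * inverse t = (t - y) / t" using t by (simp add: field_simps)
    then have "\<bar>1 - y * inverse t\<bar> = \<bar>t - y\<bar> / \<bar>t\<bar>" by simp
    then show "\<bar>1 - y * inverse t\<bar> powr q = \<bar>t - y\<bar> powr q / \<bar>t\<bar> powr q"
      by (simp add: powr_divide)
  qed
  from tendsto_cong[OF this] L show ?thesis by simp
qed

lemma ln_ratio_lim:
  fixes y :: real
  shows "((\<lambda>t. max (ln \<bar>t - y\<bar>) 0 / ln \<bar>t\<bar>) \<longlongrightarrow> 1) at_infinity"
proof -
  have lnt: "filterlim (\<lambda>t::real. ln \<bar>t\<bar>) at_top at_infinity"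
    using filterlim_compose[OF ln_at_top filterlim_norm_at_top[where 'a=real]] by (simp only: real_norm_def)
  have r: "((\<lambda>t. \<bar>t - y\<bar> powr 1 / \<bar>t\<bar> powr 1) \<longlongrightarrow> 1) at_infinity"
    by (rule ratio_powr_lim)
  have "((\<lambda>t. ln (\<bar>t - y\<bar> powr 1 / \<bar>t\<bar> powr 1)) \<longlongrightarrow> ln 1) at_infinity"
    by (rule tendsto_ln[OF r]) simp
  then have "((\<lambda>t. 1 + ln (\<bar>t - y\<bar> powr 1 / \<bar>t\<bar> powr 1) * inverse (ln \<bar>t\<bar>)) \<longlongrightarrow> 1 + ln 1 * 0) at_infinity"
    by (rule tendsto_add[OF tendsto_const tendsto_mult[OF _ tendsto_inverse_0_at_top[OF lnt]]])
  then have L: "((\<lambda>t. 1 + ln (\<bar>t - y\<bar> powr 1 / \<bar>t\<bar> powr 1) * inverse (ln \<bar>t\<bar>)) \<longlongrightarrow> 1) at_infinity"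
    by simp
  have "\<forall>\<^sub>F t in at_infinity. 1 + ln (\<bar>t - y\<bar> powr 1 / \<bar>t\<bar> powr 1) * inverse (ln \<bar>t\<bar>) = max (ln \<bar>t - y\<bar>) 0 / ln \<bar>t\<bar>"
    unfolding eventually_at_infinity
  proof (intro exI[of _ "\<bar>y\<bar> + 2"] allI impI)
    fix t :: real assume a: "\<bar>y\<bar> + 2 \<le> norm t"
    then have t: "\<bar>t\<bar> > 1" "\<bar>t - y\<bar> \<ge> 1" by auto
    then have "ln \<bar>t\<bar> > 0" "ln \<bar>t - y\<bar> \<ge> 0" by auto
    moreover have "ln (\<bar>t - y\<bar> / \<bar>t\<bar>) = ln \<bar>t - y\<bar> - ln \<bar>t\<bar>"
      using t by (subst ln_div) auto
    ultimately show "1 + ln (\<bar>t - y\<bar> powr 1 / \<bar>t\<bar> powr 1) * inverse (ln \<bar>t\<bar>) = max (ln \<bar>t - y\<bar>) 0 / ln \<bar>t\<bar>"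
      using t by (simp add: field_simps)
  qed
  from tendsto_cong[OF this] L show ?thesis by simp
qed



lemma g_int: "integrable lborel (\<lambda>t::real. indicator {0<..1} t * t powr (-1/2))"
proof -
  have "(\<lambda>t::real. t powr (-1/2)) absolutely_integrable_on {0<..1}"
    by (rule nonnegative_absolutely_integrable_1[OF integrable_on_powr_from_0']) auto
  then have "integrable lebesgue (\<lambda>t::real. indicator {0<..1} t *\<^sub>R t powr (-1/2))"
    by (simp add: set_integrable_def)
  then show ?thesis
    by (subst (asm) integrable_completion) auto
qed

lemma neg_ln_bound:
  fixes t :: real assumes "0 < t" "t \<le> 1"
  shows "- ln t \<le> 2 * t powr (-1/2)"
proof -
  have v: "t powr (-1/2) > 0" using assms by simp
  have "ln (t powr (-1/2)) \<le> t powr (-1/2) - 1" using v by (intro ln_le_minus_one) 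
  moreover have "ln (t powr (-1/2)) = (-1/2) * ln t" using assms by (simp add: ln_powr)
  ultimately show ?thesis by linarith
qed

definition Nfun :: "real \<Rightarrow> real" where "Nfun t = min (ln \<bar>t\<bar>) 0"

lemma Nfun_int: "integrable lborel Nfun"
proof -
  let ?g = "\<lambda>t::real. indicator {0<..1} t * t powr (-1/2)"
  have g2: "integrable lborel (\<lambda>t. ?g (0 + (-1) * t))"
    by (rule lborel_integrable_real_affine[OF g_int]) simp
  have w: "integrable lborel (\<lambda>t. 2 * (?g t + ?g (0 + (-1) * t)))"
    using g_int g2 by simp
  show ?thesis
  proof (rule Bochner_Integration.integrable_bound[OF w])
    show "Nfun \<in> borel_measurable lborel" unfolding Nfun_def by measurable
    show "AE x in lborel. norm (Nfun x) \<le> norm (2 * (?g x + ?g (0 + (-1) * x)))"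
    proof (rule AE_I2)
      fix x :: real
      have "\<bar>Nfun x\<bar> \<le> 2 * (?g x + ?g (- x))"
      proof (cases "x = 0 \<or> \<bar>x\<bar> > 1")
        case True
        then have "Nfun x = 0" by (auto simp: Nfun_def)
        then show ?thesis by (simp add: indicator_def)
      next
        case False
        then have x: "0 < \<bar>x\<bar>" "\<bar>x\<bar> \<le> 1" by auto
        have "ln \<bar>x\<bar> \<le> 0" using x by simp
        then have "\<bar>Nfun x\<bar> = - ln \<bar>x\<bar>" by (simp add: Nfun_def)
        also have "\<dots> \<le> 2 * \<bar>x\<bar> powr (-1/2)" by (rule neg_ln_bound[OF x])
        also have "\<dots> = 2 * (?g x + ?g (- x))"
          using x by (cases "x > 0") (auto simp: indicator_def)
        finally show ?thesis .
      qed
      moreover have "0 \<le> ?g x" "0 \<le> ?g (-x)" by (auto simp: indicator_def)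
      ultimately show "norm (Nfun x) \<le> norm (2 * (?g x + ?g (0 + (-1) * x)))" by simp
    qed
  qed
qed


lemma key0:
  fixes U :: "real \<Rightarrow> real" and t z b q R K1 :: real
  assumes R: "R \<ge> 1" and Rb: "\<And>x. \<bar>x\<bar> \<ge> R \<Longrightarrow> U x \<le> 2 * b * \<bar>x\<bar> powr q \<and> U x \<ge> b / 2 * \<bar>x\<bar> powr q"
    and q: "q \<le> -1" and b: "b > 0" and K1_def: "K1 = 4 * 2 powr (-q)"
    and that: "\<bar>t\<bar> \<ge> 2 * R" "\<bar>z\<bar> \<ge> \<bar>t\<bar> / 2"
  shows "U z \<le> K1 * U t"
proof -
      have K1: "K1 > 0" unfolding K1_def by simp
      have tR: "\<bar>t\<bar> \<ge> R" "\<bar>t\<bar> / 2 \<ge> R" using that R by auto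
      have tp: "\<bar>t\<bar> / 2 > 0" using tR R by auto
      have q0: "q \<le> 0" using q by simp
      have zR: "\<bar>z\<bar> \<ge> R" using that tR by linarith
      have "U z \<le> 2 * b * \<bar>z\<bar> powr q" using Rb[OF zR] by blast
      also have "\<bar>z\<bar> powr q \<le> (\<bar>t\<bar> / 2) powr q" by (rule powr_mono2'[OF q0 tp that(2)])
      then have "2 * b * \<bar>z\<bar> powr q \<le> 2 * b * (\<bar>t\<bar> / 2) powr q" using b by simp
      also have "(\<bar>t\<bar> / 2) powr q = \<bar>t\<bar> powr q / 2 powr q" by (rule powr_divide; simp)
      also have "\<dots> = \<bar>t\<bar> powr q * 2 powr (-q)" by (simp add: powr_minus divide_inverse)
      also have "2 * b * (\<bar>t\<bar> powr q * 2 powr (-q)) = K1 * (b / 2 * \<bar>t\<bar> powr q)"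
        unfolding K1_def by simp
      also have "\<dots> \<le> K1 * U t" using Rb[OF tR(1)] K1 by simp
      finally show ?thesis .
qed
lemma part1:
  fixes U :: "real \<Rightarrow> real" and b q R B C :: real
  assumes pos: "\<forall>x. U x > 0" and UB: "\<And>x. U x \<le> B" and B: "B > 0"
    and R: "R \<ge> 1" and Rb: "\<And>x. \<bar>x\<bar> \<ge> R \<Longrightarrow> U x \<le> 2 * b * \<bar>x\<bar> powr q \<and> U x \<ge> b / 2 * \<bar>x\<bar> powr q"
    and q: "q \<le> -1" and b: "b > 0" and asy: "U \<sim>[at_infinity] (\<lambda>x. b * \<bar>x\<bar> powr q)"
    and intU: "integrable lborel U" and intf: "integrable lborel (\<lambda>y. (U y)\<^sup>2)"
    and Uabs: "\<And>y. U \<bar>y\<bar> = U y" and C_def: "C = (LINT y|lborel. (U y)\<^sup>2)" and C: "C > 0"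
    and Um[measurable]: "U \<in> borel_measurable borel"
  shows "(\<lambda>x. LINT y|lborel. (U \<bar>y\<bar>)\<^sup>2 * U \<bar>x - y\<bar>) \<sim>[at_infinity] (\<lambda>x. C * U \<bar>x\<bar>)"
  proof -
    define K1 where "K1 = 4 * 2 powr (-q)"
    have K1: "K1 > 0" unfolding K1_def by simp
    have ratio: "((\<lambda>t. U (t - y) / U t) \<longlongrightarrow> 1) at_infinity" for y
    proof -
      have f1: "filterlim (\<lambda>t::real. -y + t) at_infinity at_infinity"
        by (rule tendsto_add_filterlim_at_infinity[OF tendsto_const filterlim_ident])
      have e1: "(\<lambda>t. U (-y + t)) \<sim>[at_infinity] (\<lambda>t. b * \<bar>-y + t\<bar> powr q)"
        by (rule asymp_equiv_compose'[OF asy f1])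
      have e2: "(\<lambda>t. b * \<bar>-y + t\<bar> powr q) \<sim>[at_infinity] (\<lambda>t. b * \<bar>t\<bar> powr q)"
      proof (rule asymp_equivI')
        have "\<And>t. \<bar>t - y\<bar> powr q / \<bar>t\<bar> powr q = (b * \<bar>-y + t\<bar> powr q) / (b * \<bar>t\<bar> powr q)"
          using b by simp
        then show "((\<lambda>t. (b * \<bar>-y + t\<bar> powr q) / (b * \<bar>t\<bar> powr q)) \<longlongrightarrow> 1) at_infinity"
          using ratio_powr_lim[of y q] by simp
      qed
      have "(\<lambda>t. U (-y + t)) \<sim>[at_infinity] U"
        using asymp_equiv_trans[OF asymp_equiv_trans[OF e1 e2] asy[THEN asymp_equiv_symI]] .
      then have "((\<lambda>t. U (-y + t) / U t) \<longlongrightarrow> 1) at_infinity"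
        by (rule asymp_equivD_strong) (use pos in \<open>auto intro!: always_eventually simp: less_imp_neq[symmetric]\<close>)
      then show ?thesis by simp
    qed
    define S1 where "S1 = (\<lambda>t y. if \<bar>y\<bar> \<le> \<bar>t\<bar> / 2 then (U y)\<^sup>2 * (U (t - y) / U t) else 0)"
    define S2 where "S2 = (\<lambda>t y. if \<bar>y\<bar> \<le> \<bar>t\<bar> / 2 then 0 else (U y)\<^sup>2 * (U (t - y) / U t))"
    have S1m: "S1 t \<in> borel_measurable lborel" for t unfolding S1_def by measurable
    have S2m: "S2 t \<in> borel_measurable lborel" for t unfolding S2_def by measurable
    have evy: "\<forall>\<^sub>F t in at_infinity. \<bar>y\<bar> \<le> \<bar>t\<bar> / 2" for y :: real
      unfolding eventually_at_infinity by (intro exI[of _ "2 * \<bar>y\<bar>"]) auto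
    have l1: "((\<lambda>t. S1 t y) \<longlongrightarrow> (U y)\<^sup>2) at_infinity" for y
    proof -
      have "((\<lambda>t. (U y)\<^sup>2 * (U (t - y) / U t)) \<longlongrightarrow> (U y)\<^sup>2 * 1) at_infinity"
        by (rule tendsto_mult[OF tendsto_const ratio])
      moreover have "\<forall>\<^sub>F t in at_infinity. (U y)\<^sup>2 * (U (t - y) / U t) = S1 t y"
        using evy[of y] by eventually_elim (simp add: S1_def)
      ultimately show ?thesis using tendsto_cong by force
    qed
    have l2: "((\<lambda>t. S2 t y) \<longlongrightarrow> 0) at_infinity" for y
    proof -
      have "\<forall>\<^sub>F t in at_infinity. 0 = S2 t y"
        using evy[of y] by eventually_elim (simp add: S2_def)
      then show ?thesis using tendsto_cong[of "\<lambda>_. 0"] by force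
    qed
    have key: "U z \<le> K1 * U t" if "\<bar>t\<bar> \<ge> 2 * R" "\<bar>z\<bar> \<ge> \<bar>t\<bar> / 2" for t z
      by (rule key0[OF R Rb q b K1_def that])
    have b1: "\<forall>\<^sub>F t in at_infinity. \<forall>y. norm (S1 t y) \<le> K1 * (U y)\<^sup>2"
      unfolding eventually_at_infinity
    proof (intro exI[of _ "2 * R"] allI impI)
      fix t y :: real assume t: "2 * R \<le> norm t"
      have ut: "U t > 0" using pos by auto
      show "norm (S1 t y) \<le> K1 * (U y)\<^sup>2"
      proof (cases "\<bar>y\<bar> \<le> \<bar>t\<bar> / 2")
        case True
        have "\<bar>t - y\<bar> \<ge> \<bar>t\<bar> / 2" using True by linarith
        then have "U (t - y) \<le> K1 * U t" using t by (intro key) auto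
        then have "U (t - y) / U t \<le> K1" using ut by (simp add: divide_le_eq)
        moreover have "U (t - y) / U t \<ge> 0" using pos ut by (simp add: less_imp_le)
        ultimately have X: "(U y)\<^sup>2 * (U (t - y) / U t) \<le> K1 * (U y)\<^sup>2"
          and Y: "0 \<le> (U y)\<^sup>2 * (U (t - y) / U t)"
          by (metis mult.commute mult_left_mono zero_le_power2, metis mult_nonneg_nonneg zero_le_power2)
        have e: "S1 t y = (U y)\<^sup>2 * (U (t - y) / U t)" using True by (simp add: S1_def)
        show ?thesis unfolding e real_norm_def using X Y by arith
      next
        case False
        then show ?thesis using K1 by (simp add: S1_def)
      qed
    qed
    have b2: "\<forall>\<^sub>F t in at_infinity. \<forall>y. norm (S2 t y) \<le> K1 * B * U y"
      unfolding eventually_at_infinity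
    proof (intro exI[of _ "2 * R"] allI impI)
      fix t y :: real assume t: "2 * R \<le> norm t"
      have ut: "U t > 0" using pos by auto
      have uy: "U y > 0" "U (t - y) > 0" using pos by auto
      show "norm (S2 t y) \<le> K1 * B * U y"
      proof (cases "\<bar>y\<bar> \<le> \<bar>t\<bar> / 2")
        case False
        then have "U y \<le> K1 * U t" using t by (intro key) auto
        then have "U y * U (t - y) \<le> (K1 * U t) * B"
          using UB[of "t - y"] uy K1 ut by (intro mult_mono) auto
        then have "U y * U (t - y) / U t \<le> K1 * B" using ut by (simp add: divide_le_eq mult.commute mult.left_commute)
        then have "U y * (U y * U (t - y) / U t) \<le> U y * (K1 * B)" using uy by (intro mult_left_mono) auto
        moreover have "S2 t y = U y * (U y * U (t - y) / U t)" using False by (simp add: S2_def power2_eq_square)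
        moreover have "U y * (U y * U (t - y) / U t) \<ge> 0" using uy ut by simp
        ultimately show ?thesis by (simp add: mult.commute mult.left_commute)
      next
        case True
        then show ?thesis using K1 B uy by (simp add: S2_def)
      qed
    qed
    have w1: "integrable lborel (\<lambda>y. K1 * (U y)\<^sup>2)" using intf by simp
    have w2: "integrable lborel (\<lambda>y. K1 * B * U y)" using intU by simp
    have lim1: "((\<lambda>t. LINT y|lborel. S1 t y) \<longlongrightarrow> C) at_infinity"
      unfolding C_def by (rule dct_inf(1)[OF S1m _ w1 l1 b1]) measurable
    have int1: "\<forall>\<^sub>F t in at_infinity. integrable lborel (S1 t)"
      by (rule dct_inf(2)[OF S1m _ w1 l1 b1]) measurable
    have lim2: "((\<lambda>t. LINT y|lborel. S2 t y) \<longlongrightarrow> 0) at_infinity"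
      using dct_inf(1)[where L="\<lambda>y::real. 0::real", OF S2m borel_measurable_const w2 l2 b2] by simp
    have int2: "\<forall>\<^sub>F t in at_infinity. integrable lborel (S2 t)"
      by (rule dct_inf(2)[where L="\<lambda>y::real. 0::real", OF S2m borel_measurable_const w2 l2 b2])
    have "((\<lambda>t. ((LINT y|lborel. S1 t y) + (LINT y|lborel. S2 t y)) / C) \<longlongrightarrow> (C + 0) / C) at_infinity"
      using lim1 lim2 C by (intro tendsto_divide tendsto_add tendsto_const) auto
    then have L: "((\<lambda>t. ((LINT y|lborel. S1 t y) + (LINT y|lborel. S2 t y)) / C) \<longlongrightarrow> 1) at_infinity"
      using C by simp
    have "\<forall>\<^sub>F t in at_infinity. ((LINT y|lborel. S1 t y) + (LINT y|lborel. S2 t y)) / C =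
        (LINT y|lborel. (U \<bar>y\<bar>)\<^sup>2 * U \<bar>t - y\<bar>) / (C * U \<bar>t\<bar>)"
      using int1 int2
    proof eventually_elim
      case (elim t)
      have ut: "U t > 0" using pos by auto
      have pw: "(U y)\<^sup>2 * U (t - y) / U t = S1 t y + S2 t y" for y
        by (simp add: S1_def S2_def)
      have "(LINT y|lborel. S1 t y) + (LINT y|lborel. S2 t y) = (LINT y|lborel. S1 t y + S2 t y)"
        using elim by simp
      also have "\<dots> = (LINT y|lborel. (U y)\<^sup>2 * U (t - y) / U t)" by (simp only: pw)
      also have "\<dots> = (LINT y|lborel. (U y)\<^sup>2 * U (t - y)) / U t" by simp
      finally show ?case using ut C by (simp add: Uabs field_simps)
    qed
    from tendsto_cong[OF this] L show ?thesis by (intro asymp_equivI') simp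
  qed
theorem lemma9p1:
  fixes s :: real and U :: "real \<Rightarrow> real"
  assumes s_range: "1/2 \<le> s" "s < 1"
    and cont: "continuous_on UNIV U"
    and pos: "\<forall>x. U x > 0"
    and even: "\<forall>x. U (- x) = U x"
    and sol: "frac_eq_solution s U"
    and vanish: "(U \<longlongrightarrow> 0) at_infinity"
    and decay: "\<exists>b>0. U \<sim>[at_infinity] (\<lambda>x. b * \<bar>x\<bar> powr (- 1 - 2 * s))"
  shows "\<exists>c>0.
     (\<lambda>x. LINT y|lborel. (U \<bar>y\<bar>)\<^sup>2 * U \<bar>x - y\<bar>) \<sim>[at_infinity] (\<lambda>x. c * U \<bar>x\<bar>) \<and>
     (\<lambda>x. LINT y|lborel. (U \<bar>y\<bar>)\<^sup>2 * \<bar>x - y\<bar> powr (2 * s - 1))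
        \<sim>[at_infinity] (\<lambda>x. c * \<bar>x\<bar> powr (2 * s - 1)) \<and>
     (\<lambda>x. LINT y|lborel. (U \<bar>y\<bar>)\<^sup>2 * ln \<bar>x - y\<bar>) \<sim>[at_infinity] (\<lambda>x. c * ln \<bar>x\<bar>)"
proof -
  define q where "q = - 1 - 2 * s"
  have q: "q \<le> -1" using s_range by (simp add: q_def)
  obtain b where b: "b > 0" and asy: "U \<sim>[at_infinity] (\<lambda>x. b * \<bar>x\<bar> powr q)"
    using decay unfolding q_def by blast
  have Uabs: "U \<bar>y\<bar> = U y" for y using even by (cases "y \<ge> 0") (auto simp: abs_if)
  have Um[measurable]: "U \<in> borel_measurable borel" by (rule borel_measurable_continuous_onI[OF cont])
  have intU: "integrable lborel U" and intf: "integrable lborel (\<lambda>y. (U y)\<^sup>2)"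
    using sol by (auto simp: frac_eq_solution_def)
  obtain R where R: "R \<ge> 1" and Rb: "\<And>x. \<bar>x\<bar> \<ge> R \<Longrightarrow> U x \<le> 2 * b * \<bar>x\<bar> powr q \<and> U x \<ge> b / 2 * \<bar>x\<bar> powr q"
  proof -
    have "((\<lambda>x. U x / (b * \<bar>x\<bar> powr q)) \<longlongrightarrow> 1) at_infinity"
      by (rule asymp_equivD_strong[OF asy]) (use pos in \<open>auto intro!: always_eventually simp: less_imp_neq[symmetric]\<close>)
    then have "\<forall>\<^sub>F x in at_infinity. U x / (b * \<bar>x\<bar> powr q) < 2 \<and> U x / (b * \<bar>x\<bar> powr q) > 1/2"
      by (intro eventually_conj order_tendstoD) auto
    then obtain R0 where R0: "\<And>x. norm x \<ge> R0 \<Longrightarrow> U x / (b * \<bar>x\<bar> powr q) < 2 \<and> U x / (b * \<bar>x\<bar> powr q) > 1/2"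
      unfolding eventually_at_infinity by blast
    show ?thesis
    proof (rule that[of "max R0 1"])
      fix x :: real assume x: "\<bar>x\<bar> \<ge> max R0 1"
      then have d: "b * \<bar>x\<bar> powr q > 0" using b by (intro mult_pos_pos) auto
      from R0[of x] x have "U x / (b * \<bar>x\<bar> powr q) < 2" "U x / (b * \<bar>x\<bar> powr q) > 1/2" by auto
      then show "U x \<le> 2 * b * \<bar>x\<bar> powr q \<and> U x \<ge> b / 2 * \<bar>x\<bar> powr q"
        using d by (auto simp: field_simps)
    qed auto
  qed
  obtain B where B: "B > 0" and UB: "\<And>x. U x \<le> B"
  proof -
    have "\<forall>\<^sub>F x in at_infinity. U x < 1"
      using order_tendstoD(2)[OF vanish] by simp
    then obtain R0 where R0: "\<And>x. norm x \<ge> R0 \<Longrightarrow> U x < 1"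
      unfolding eventually_at_infinity by blast
    have "bounded (U ` cball 0 R0)"
      by (intro compact_imp_bounded compact_continuous_image continuous_on_subset[OF cont]) auto
    then obtain M where M: "\<And>y. y \<in> U ` cball 0 R0 \<Longrightarrow> \<bar>y\<bar> \<le> M"
      unfolding bounded_real by blast
    show ?thesis
    proof (rule that[of "max M 1"])
      fix x :: real
      show "U x \<le> max M 1"
      proof (cases "\<bar>x\<bar> \<le> R0")
        case True then have "\<bar>U x\<bar> \<le> M" by (intro M) auto
        then show ?thesis by auto
      next
        case False then show ?thesis using R0[of x] by auto
      qed
    qed auto
  qed
  have intyf: "integrable lborel (\<lambda>y. \<bar>y\<bar> * (U y)\<^sup>2)"
  proof (rule Bochner_Integration.integrable_bound)
    show "integrable lborel (\<lambda>y. 2 * b * U y + R * (U y)\<^sup>2)" using intU intf by simp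
    show "(\<lambda>y. \<bar>y\<bar> * (U y)\<^sup>2) \<in> borel_measurable lborel" by measurable
    show "AE y in lborel. norm (\<bar>y\<bar> * (U y)\<^sup>2) \<le> norm (2 * b * U y + R * (U y)\<^sup>2)"
    proof (rule AE_I2)
      fix y :: real
      have u: "U y > 0" using pos by auto
      have "\<bar>y\<bar> * (U y)\<^sup>2 \<le> 2 * b * U y + R * (U y)\<^sup>2"
      proof (cases "\<bar>y\<bar> \<ge> R")
        case True
        then have y1: "\<bar>y\<bar> \<ge> 1" using R by auto
        have "\<bar>y\<bar> powr q \<le> \<bar>y\<bar> powr (-1)" using y1 q by (intro powr_mono) auto
        moreover have "\<bar>y\<bar> * \<bar>y\<bar> powr (-1) = 1" using y1 by (simp add: powr_minus)
        ultimately have "\<bar>y\<bar> * \<bar>y\<bar> powr q \<le> 1"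
          by (metis abs_ge_zero mult_left_mono)
        have "\<bar>y\<bar> * (U y)\<^sup>2 = (\<bar>y\<bar> * U y) * U y" by (simp add: power2_eq_square)
        also have "\<dots> \<le> (\<bar>y\<bar> * (2 * b * \<bar>y\<bar> powr q)) * U y"
          using Rb[OF True] u by (intro mult_right_mono mult_left_mono) auto
        also have "\<dots> = 2 * b * (\<bar>y\<bar> * \<bar>y\<bar> powr q) * U y" by simp
        also have "\<dots> \<le> 2 * b * 1 * U y"
          using \<open>\<bar>y\<bar> * \<bar>y\<bar> powr q \<le> 1\<close> b u by (intro mult_right_mono mult_left_mono) auto
        finally show ?thesis using R by (simp add: add_increasing2)
      next
        case False
        have "\<bar>y\<bar> * (U y)\<^sup>2 \<le> R * (U y)\<^sup>2" using False by (intro mult_right_mono) auto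
        then show ?thesis using b u by (simp add: add_increasing)
      qed
      then show "norm (\<bar>y\<bar> * (U y)\<^sup>2) \<le> norm (2 * b * U y + R * (U y)\<^sup>2)" by simp
    qed
  qed
  define C where "C = (LINT y|lborel. (U y)\<^sup>2)"
  have C: "C > 0"
  proof -
    have "C \<ge> 0" unfolding C_def by simp
    moreover have "C \<noteq> 0"
    proof
      assume "C = 0"
      then have "AE y in lborel. (U y)\<^sup>2 = 0"
        unfolding C_def by (subst (asm) integral_nonneg_eq_0_iff_AE[OF intf]) auto
      moreover have "AE y in lborel. (U y)\<^sup>2 = 0 \<longrightarrow> False"
      proof (intro AE_I2 impI)
        fix y assume "(U y)\<^sup>2 = 0"
        then show False using pos[rule_format, of y] by simp
      qed
      ultimately have "AE (y::real) in lborel. False" by (rule AE_mp)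
      then have "ae_filter lborel = (bot :: real filter)" using trivial_limit_def by blast
      then show False unfolding ae_filter_eq_bot_iff by simp
    qed
    ultimately show ?thesis by simp
  qed
  define a where "a = 2 * s - 1"
  have a: "0 \<le> a" "a < 1" using s_range by (auto simp: a_def)
  have wint: "integrable lborel (\<lambda>y. (U y)\<^sup>2 + \<bar>y\<bar> * (U y)\<^sup>2)" using intf intyf by simp
  have P2: "(\<lambda>x. LINT y|lborel. (U \<bar>y\<bar>)\<^sup>2 * \<bar>x - y\<bar> powr (2 * s - 1))
        \<sim>[at_infinity] (\<lambda>x. C * \<bar>x\<bar> powr (2 * s - 1))"
  proof -
    define S where "S = (\<lambda>t y. (U y)\<^sup>2 * (\<bar>t - y\<bar> powr a / \<bar>t\<bar> powr a))"
    have lim: "((\<lambda>t. LINT y|lborel. S t y) \<longlongrightarrow> (LINT y|lborel. (U y)\<^sup>2)) at_infinity"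
    proof (rule dct_inf(1)[where w="\<lambda>y. (U y)\<^sup>2 + \<bar>y\<bar> * (U y)\<^sup>2"])
      show "S t \<in> borel_measurable lborel" for t unfolding S_def by measurable
      show "(\<lambda>y. (U y)\<^sup>2) \<in> borel_measurable lborel" by measurable
      show "integrable lborel (\<lambda>y. (U y)\<^sup>2 + \<bar>y\<bar> * (U y)\<^sup>2)" by (rule wint)
      show "((\<lambda>t. S t y) \<longlongrightarrow> (U y)\<^sup>2) at_infinity" for y
        using tendsto_mult[OF tendsto_const ratio_powr_lim[of y a]] by (simp add: S_def)
      show "\<forall>\<^sub>F t in at_infinity. \<forall>y. norm (S t y) \<le> (U y)\<^sup>2 + \<bar>y\<bar> * (U y)\<^sup>2"
        unfolding eventually_at_infinity
      proof (intro exI[of _ 1] allI impI)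
        fix t y :: real assume t: "1 \<le> norm t"
        have tp: "\<bar>t\<bar> powr a > 0" using t by auto
        have "\<bar>y\<bar> \<le> \<bar>t\<bar> * \<bar>y\<bar>" using t mult_right_mono[of 1 "\<bar>t\<bar>" "\<bar>y\<bar>"] by simp
        then have "\<bar>t - y\<bar> \<le> \<bar>t\<bar> * (1 + \<bar>y\<bar>)" using abs_triangle_ineq4[of t y] by (simp add: algebra_simps)
        then have "\<bar>t - y\<bar> powr a \<le> (\<bar>t\<bar> * (1 + \<bar>y\<bar>)) powr a" using a by (intro powr_mono2) auto
        also have "\<dots> = \<bar>t\<bar> powr a * (1 + \<bar>y\<bar>) powr a" by (simp add: powr_mult)
        also have "\<dots> \<le> \<bar>t\<bar> powr a * (1 + \<bar>y\<bar>) powr 1" using a tp by (intro mult_left_mono powr_mono) auto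
        finally have "\<bar>t - y\<bar> powr a / \<bar>t\<bar> powr a \<le> 1 + \<bar>y\<bar>" using tp by (simp add: divide_le_eq mult.commute)
        then have "(U y)\<^sup>2 * (\<bar>t - y\<bar> powr a / \<bar>t\<bar> powr a) \<le> (U y)\<^sup>2 * (1 + \<bar>y\<bar>)"
          by (intro mult_left_mono) auto
        then show "norm (S t y) \<le> (U y)\<^sup>2 + \<bar>y\<bar> * (U y)\<^sup>2"
          using tp by (simp add: S_def algebra_simps)
      qed
    qed
    have "((\<lambda>t. (LINT y|lborel. S t y) / C) \<longlongrightarrow> C / C) at_infinity"
      using lim unfolding C_def[symmetric] by (intro tendsto_divide tendsto_const) (use C in auto)
    then have L: "((\<lambda>t. (LINT y|lborel. S t y) / C) \<longlongrightarrow> 1) at_infinity" using C by simp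
    have "\<forall>\<^sub>F t in at_infinity. (LINT y|lborel. S t y) / C =
        (LINT y|lborel. (U \<bar>y\<bar>)\<^sup>2 * \<bar>t - y\<bar> powr (2 * s - 1)) / (C * \<bar>t\<bar> powr (2 * s - 1))"
      unfolding eventually_at_infinity
    proof (intro exI[of _ 1] allI impI)
      fix t :: real assume t: "1 \<le> norm t"
      have "(LINT y|lborel. S t y) = (LINT y|lborel. (U y)\<^sup>2 * \<bar>t - y\<bar> powr a) / \<bar>t\<bar> powr a"
        unfolding S_def times_divide_eq_right integral_divide_zero ..
      then show "(LINT y|lborel. S t y) / C =
        (LINT y|lborel. (U \<bar>y\<bar>)\<^sup>2 * \<bar>t - y\<bar> powr (2 * s - 1)) / (C * \<bar>t\<bar> powr (2 * s - 1))"
        by (simp add: Uabs a_def)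
    qed
    from tendsto_cong[OF this] L show ?thesis by (intro asymp_equivI') simp
  qed
  have P3: "(\<lambda>x. LINT y|lborel. (U \<bar>y\<bar>)\<^sup>2 * ln \<bar>x - y\<bar>) \<sim>[at_infinity] (\<lambda>x. C * ln \<bar>x\<bar>)"
  proof -
    define S where "S = (\<lambda>t y. (U y)\<^sup>2 * (max (ln \<bar>t - y\<bar>) 0 / ln \<bar>t\<bar>))"
    define Q where "Q = (\<lambda>t y. (U y)\<^sup>2 * Nfun (t - y))"
    have Nm[measurable]: "Nfun \<in> borel_measurable borel" unfolding Nfun_def by measurable
    have lnt: "filterlim (\<lambda>t::real. ln \<bar>t\<bar>) at_top at_infinity"
      using filterlim_compose[OF ln_at_top filterlim_norm_at_top[where 'a=real]] by (simp only: real_norm_def)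
    have Sm: "S t \<in> borel_measurable lborel" for t unfolding S_def by measurable
    have Sb: "\<forall>\<^sub>F t in at_infinity. \<forall>y. norm (S t y) \<le> (U y)\<^sup>2 + \<bar>y\<bar> * (U y)\<^sup>2"
      unfolding eventually_at_infinity
    proof (intro exI[of _ "exp 1"] allI impI)
      fix t y :: real assume t: "exp 1 \<le> norm t"
      have t1: "\<bar>t\<bar> \<ge> 1" using t by (metis one_le_exp_iff order_trans real_norm_def zero_le_one)
      have lt: "ln \<bar>t\<bar> \<ge> 1" using t by (metis exp_gt_zero ln_exp ln_le_cancel_iff order_less_le_trans real_norm_def)
      have "max (ln \<bar>t - y\<bar>) 0 \<le> ln \<bar>t\<bar> + \<bar>y\<bar>"
      proof (cases "\<bar>t - y\<bar> \<le> 1")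
        case True
        then have "ln \<bar>t - y\<bar> \<le> 0" by (cases "t - y = 0") auto
        then show ?thesis using lt by simp
      next
        case False
        have "\<bar>y\<bar> \<le> \<bar>t\<bar> * \<bar>y\<bar>" using t1 mult_right_mono[of 1 "\<bar>t\<bar>" "\<bar>y\<bar>"] by simp
        then have "\<bar>t - y\<bar> \<le> \<bar>t\<bar> * (1 + \<bar>y\<bar>)" using abs_triangle_ineq4[of t y] by (simp add: algebra_simps)
        then have "ln \<bar>t - y\<bar> \<le> ln (\<bar>t\<bar> * (1 + \<bar>y\<bar>))" using False by (subst ln_le_cancel_iff) auto
        also have "\<dots> = ln \<bar>t\<bar> + ln (1 + \<bar>y\<bar>)" using t1 by (subst ln_mult) auto
        also have "ln (1 + \<bar>y\<bar>) \<le> \<bar>y\<bar>" by (rule ln_add_one_self_le_self) simp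
        finally show ?thesis using lt by simp
      qed
      then have "max (ln \<bar>t - y\<bar>) 0 / ln \<bar>t\<bar> \<le> (ln \<bar>t\<bar> + \<bar>y\<bar>) / ln \<bar>t\<bar>"
        using lt by (intro divide_right_mono) auto
      also have "\<dots> = 1 + \<bar>y\<bar> / ln \<bar>t\<bar>" using lt by (simp add: field_simps)
      also have "\<dots> \<le> 1 + \<bar>y\<bar>" using lt by (simp add: divide_le_eq mult_le_cancel_left1 mult.commute)
      finally have "max (ln \<bar>t - y\<bar>) 0 / ln \<bar>t\<bar> \<le> 1 + \<bar>y\<bar>" .
      moreover have "max (ln \<bar>t - y\<bar>) 0 / ln \<bar>t\<bar> \<ge> 0" using lt by simp
      ultimately have "(U y)\<^sup>2 * (max (ln \<bar>t - y\<bar>) 0 / ln \<bar>t\<bar>) \<le> (U y)\<^sup>2 * (1 + \<bar>y\<bar>)"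
        "(U y)\<^sup>2 * (max (ln \<bar>t - y\<bar>) 0 / ln \<bar>t\<bar>) \<ge> 0"
        by (metis mult_left_mono zero_le_power2, metis mult_nonneg_nonneg zero_le_power2)
      then show "norm (S t y) \<le> (U y)\<^sup>2 + \<bar>y\<bar> * (U y)\<^sup>2"
        using lt by (simp add: S_def algebra_simps)
    qed
    have lim: "((\<lambda>t. LINT y|lborel. S t y) \<longlongrightarrow> (LINT y|lborel. (U y)\<^sup>2)) at_infinity"
      and Sint: "\<forall>\<^sub>F t in at_infinity. integrable lborel (S t)"
    proof -
      have l: "((\<lambda>t. S t y) \<longlongrightarrow> (U y)\<^sup>2) at_infinity" for y
        using tendsto_mult[OF tendsto_const ln_ratio_lim[of y]] by (simp add: S_def)
      show "((\<lambda>t. LINT y|lborel. S t y) \<longlongrightarrow> (LINT y|lborel. (U y)\<^sup>2)) at_infinity"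
        by (rule dct_inf(1)[OF Sm _ wint l Sb]) measurable
      show "\<forall>\<^sub>F t in at_infinity. integrable lborel (S t)"
        by (rule dct_inf(2)[OF Sm _ wint l Sb]) measurable
    qed
    define K where "K = B\<^sup>2 * (LINT x|lborel. \<bar>Nfun x\<bar>)"
    have Qint: "integrable lborel (Q t)" and Qb: "\<bar>LINT y|lborel. Q t y\<bar> \<le> K" for t
    proof -
      have N2: "integrable lborel (\<lambda>y. Nfun (t + (-1) * y))"
        by (rule lborel_integrable_real_affine[OF Nfun_int]) simp
      have ub: "(U y)\<^sup>2 \<le> B\<^sup>2" for y using UB[of y] pos by (intro power_mono) (auto simp: less_imp_le)
      have pb: "\<bar>(U y)\<^sup>2 * Nfun (t - y)\<bar> \<le> B\<^sup>2 * \<bar>Nfun (t - y)\<bar>" for y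
        using ub[of y] by (simp add: abs_mult mult_right_mono)
      have w: "integrable lborel (\<lambda>y. B\<^sup>2 * \<bar>Nfun (t - y)\<bar>)" using N2 by simp
      show qi: "integrable lborel (Q t)" unfolding Q_def
        by (rule Bochner_Integration.integrable_bound[OF w]) (use pb in \<open>auto intro!: AE_I2\<close>)
      have "\<bar>LINT y|lborel. Q t y\<bar> \<le> (LINT y|lborel. \<bar>Q t y\<bar>)"
        using integral_norm_bound[of lborel "Q t"] by simp
      also have "\<dots> \<le> (LINT y|lborel. B\<^sup>2 * \<bar>Nfun (t - y)\<bar>)"
        using qi w pb unfolding Q_def by (intro integral_mono) auto
      also have "\<dots> = B\<^sup>2 * (LINT y|lborel. \<bar>Nfun (t - y)\<bar>)" by simp
      also have "(LINT y|lborel. \<bar>Nfun (t - y)\<bar>) = (LINT x|lborel. \<bar>Nfun x\<bar>)"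
        using lborel_integral_real_affine[of "-1" "\<lambda>x. \<bar>Nfun x\<bar>" t] by simp
      finally show "\<bar>LINT y|lborel. Q t y\<bar> \<le> K" unfolding K_def .
    qed
    have "((\<lambda>t. (LINT y|lborel. S t y) / C + (LINT y|lborel. Q t y) / (C * ln \<bar>t\<bar>)) \<longlongrightarrow> C / C + 0) at_infinity"
    proof (intro tendsto_add tendsto_divide tendsto_const)
      show "((\<lambda>t. LINT y|lborel. S t y) \<longlongrightarrow> C) at_infinity" using lim unfolding C_def .
      show "C \<noteq> 0" using C by simp
      show "((\<lambda>t. (LINT y|lborel. Q t y) / (C * ln \<bar>t\<bar>)) \<longlongrightarrow> 0) at_infinity"
      proof (rule Lim_null_comparison)
        show "\<forall>\<^sub>F t in at_infinity. norm ((LINT y|lborel. Q t y) / (C * ln \<bar>t\<bar>)) \<le> K / C * inverse (ln \<bar>t\<bar>)"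
          unfolding eventually_at_infinity
        proof (intro exI[of _ "exp 1"] allI impI)
          fix t :: real assume t: "exp 1 \<le> norm t"
          have lt: "ln \<bar>t\<bar> \<ge> 1" using t by (metis exp_gt_zero ln_exp ln_le_cancel_iff order_less_le_trans real_norm_def)
          have "norm ((LINT y|lborel. Q t y) / (C * ln \<bar>t\<bar>)) = \<bar>LINT y|lborel. Q t y\<bar> / (C * ln \<bar>t\<bar>)"
            using lt C by (simp add: abs_mult)
          also have "\<dots> \<le> K / (C * ln \<bar>t\<bar>)" using lt C Qb[of t] by (intro divide_right_mono) auto
          finally show "norm ((LINT y|lborel. Q t y) / (C * ln \<bar>t\<bar>)) \<le> K / C * inverse (ln \<bar>t\<bar>)"
            by (simp add: field_simps)
        qed
        show "((\<lambda>t. K / C * inverse (ln \<bar>t\<bar>)) \<longlongrightarrow> 0) at_infinity"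
          using tendsto_mult[OF tendsto_const tendsto_inverse_0_at_top[OF lnt], of "K / C"] by simp
      qed
    qed
    then have L: "((\<lambda>t. (LINT y|lborel. S t y) / C + (LINT y|lborel. Q t y) / (C * ln \<bar>t\<bar>)) \<longlongrightarrow> 1) at_infinity"
      using C by simp
    have ev: "\<forall>\<^sub>F t in at_infinity. exp 1 \<le> norm (t::real)"
      unfolding eventually_at_infinity by blast
    have "\<forall>\<^sub>F t in at_infinity. (LINT y|lborel. S t y) / C + (LINT y|lborel. Q t y) / (C * ln \<bar>t\<bar>) =
        (LINT y|lborel. (U \<bar>y\<bar>)\<^sup>2 * ln \<bar>t - y\<bar>) / (C * ln \<bar>t\<bar>)"
      using Sint ev
    proof (eventually_elim)
      case (elim t)
      then have si: "integrable lborel (S t)" and t: "exp 1 \<le> norm t" by auto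
      have lt: "ln \<bar>t\<bar> \<ge> 1" using t by (metis exp_gt_zero ln_exp ln_le_cancel_iff order_less_le_trans real_norm_def)
      have pw: "(U \<bar>y\<bar>)\<^sup>2 * ln \<bar>t - y\<bar> = ln \<bar>t\<bar> * S t y + Q t y" for y
      proof -
        have e: "ln \<bar>t - y\<bar> = max (ln \<bar>t - y\<bar>) 0 + Nfun (t - y)" by (simp add: Nfun_def)
        have "(U y)\<^sup>2 * ln \<bar>t - y\<bar> = (U y)\<^sup>2 * (max (ln \<bar>t - y\<bar>) 0 + Nfun (t - y))"
          by (simp only: e[symmetric])
        also have "\<dots> = ln \<bar>t\<bar> * S t y + Q t y" using lt by (simp add: S_def Q_def distrib_left)
        finally show ?thesis by (simp add: Uabs)
      qed
      have "(LINT y|lborel. (U \<bar>y\<bar>)\<^sup>2 * ln \<bar>t - y\<bar>) = (LINT y|lborel. ln \<bar>t\<bar> * S t y + Q t y)"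
        by (simp only: pw)
      also have "\<dots> = ln \<bar>t\<bar> * (LINT y|lborel. S t y) + (LINT y|lborel. Q t y)"
        using si Qint[of t] by simp
      finally show ?case using lt C by (simp add: field_simps)
    qed
    from tendsto_cong[OF this] L show ?thesis by (intro asymp_equivI') simp
  qed
  have P1: "(\<lambda>x. LINT y|lborel. (U \<bar>y\<bar>)\<^sup>2 * U \<bar>x - y\<bar>) \<sim>[at_infinity] (\<lambda>x. C * U \<bar>x\<bar>)"
    by (rule part1[OF pos UB B R Rb q b asy intU intf Uabs C_def C Um])
  show ?thesis
    by (rule exI[of _ C]) (use C P1 P2 P3 in simp)
qed

end
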